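(* Consider the stochastic bipartite matching model described in the context, under the stability condition, with stationary distribution $\pi$. Fix $i\in\mathcal{I}$, and for $\mathcal{A}\in\mathcal{J}_0$ define $\ell_i(\mathcal{A})=\sum_{(c,d)\in\Pi_{\mathcal{A}}}|c|_i\,\pi(c,d)$ (so that $\ell_i(\mathcal{A})/\pi(\mathcal{A})$ is the stationary mean number of unmatched class-$i$ customers given that the set of unmatched classes is $\mathcal{A}$), with the convention $\ell_i(\mathcal{A})=0$ if $\mathcal{A}\notin\mathcal{J}_0$. Then the stationary mean number of unmatched class-$i$ customers is $L_i=\sum_{\mathcal{A}\in\mathcal{J}_0}\ell_i(\mathcal{A})$, we have $\ell_i(\mathcal{A})=0$ whenever $i\notin\mathcal{A}$, and for each $\mathcal{A}\in\mathcal{J}$ with $i\in\mathcal{A}$, \[ \begin{aligned} \Delta(\mathcal{A})\,\ell_i(\mathcal{A}) ={}& \lambda_i\,\mu(\mathcal{A}\cap\mathcal{K})\big(\pi(\mathcal{A})+\pi(\mathcal{A}\setminus\{i\})\big) + \lambda_i\sum_{k\in\mathcal{A}\cap\mathcal{K}}\mu_k\big(\pi(\mathcal{A}\setminus\{k\})+\pi(\mathcal{A}\setminus\{i,k\})\big)\\ &+\mu(\mathcal{A}\cap\mathcal{K})\sum_{j\in\mathcal{A}\cap\mathcal{I}}\lambda_j\,\ell_i(\mathcal{A}\setminus\{j\}) + \lambda(\mathcal{A}\cap\mathcal{I})\sum_{k\in\mathcal{A}\cap\mathcal{K}}\mu_k\,\ell_i(\mathcal{A}\setminus\{k\})\\ &+\sum_{j\in\mathcal{A}\cap\mathcal{I}}\sum_{k\in\mathcal{A}\cap\mathcal{K}}\lambda_j\mu_k\,\ell_i(\mathcal{A}\setminus\{j,k\}).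 \end{aligned} \]
   Context: Let $\mathcal{I}$ (customer classes) and $\mathcal{K}$ (server classes) be disjoint finite non-empty sets, and consider a connected bipartite graph (the compatibility graph) on $\mathcal{I}\cup\mathcal{K}$ whose edges all join an element of $\mathcal{I}$ to an element of $\mathcal{K}$; write $i\sim k$ if $i\in\mathcal{I}$ and $k\in\mathcal{K}$ are adjacent and $i\nsim k$ otherwise. For $i\in\mathcal{I}$ let $\mathcal{K}_i=\{k\in\mathcal{K}: i\sim k\}$ and for $k\in\mathcal{K}$ let $\mathcal{I}_k=\{i\in\mathcal{I}: i\sim k\}$. Let $\lambda_i>0$ ($i\in\mathcal{I}$) and $\mu_k>0$ ($k\in\mathcal{K}$) with $\sum_i\lambda_i=\sum_k\mu_k=1$. For $\mathcal{A}\subseteq\mathcal{I}$ write $\lambda(\mathcal{A})=\sum_{i\in\mathcal{A}}\lambda_i$ and $\mathcal{K}(\mathcal{A})=\bigcup_{i\in\mathcal{A}}\mathcal{K}_i$; for $\mathcal{A}\subseteq\mathcal{K}$ write $\mu(\mathcal{A})=\sum_{k\in\mathcal{A}}\mu_k$ and $\mathcal{I}(\mathcal{A})=\bigcup_{k\in\mathcal{A}}\mathcal{I}_k$. Model: time is slotted; in each slot exactly one customer and one server arrive, the customer being of class $i$ with probability $\lambda_i$ and the server of class $k$ with probability $\mu_k$, independently within and across slots. Unmatched customers and unmatched servers wait in two queues in arrival order. Upon each arrival (first-come-first-matched policy): (1) the incoming customer is matched with the longest-waiting compatible unmatched server, if any; (2) the incoming server is matched with the longest-waiting compatible unmatched customer,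 if any; (3) if neither can be matched with a waiting item, they are matched with each other if compatible; (4) any incoming item still unmatched is appended to the back of its queue. Matched items leave immediately. The state is $(c,d)$ with $c=(c_1,\dots,c_n)$ the classes of unmatched customers and $d=(d_1,\dots,d_n)$ the classes of unmatched servers, in arrival order (the two lengths are always equal); the state space is $\Pi=\bigcup_{n\ge0}\{(c,d)\in\mathcal{I}^n\times\mathcal{K}^n: c_p\nsim d_q\ \forall p,q\}$, and $\varnothing$ denotes the empty state. For a sequence $c$, $|c|_i$ is the number of occurrences of $i$ in $c$. Stability condition (assumed): $\lambda(\mathcal{A})<\mu(\mathcal{K}(\mathcal{A}))$ for every non-empty $\mathcal{A}\subsetneq\mathcal{I}$ (equivalently $\mu(\mathcal{A})<\lambda(\mathcal{I}(\mathcal{A}))$ for every non-empty $\mathcal{A}\subsetneq\mathcal{K}$). Then the Markov chain of states is ergodic with stationary distribution $\pi(c,d)=\pi(\varnothing)\prod_{p=1}^n \frac{\lambda_{c_p}}{\mu(\mathcal{K}(\{c_1,\dots,c_p\}))}\frac{\mu_{d_p}}{\lambda(\mathcal{I}(\{d_1,\dots,d_p\}))}$, $(c,d)\in\Pi$. Let $\mathcal{J}$ be the family of independent sets $\mathcal{A}\subseteq\mathcal{I}\cup\mathcal{K}$ of the compatibility graph such that $\mathcal{A}\cap\mathcal{I}$ and $\mathcal{A}\cap\mathcal{K}$ are both non-empty, and $\mathcal{J}_0=\mathcal{J}\cup\{\emptyset\}$. For $\mathcal{A}\in\mathcal{J}_0$, let $\Pi_{\mathcal{A}}$ be the set of $(c,d)\in\Pi$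 with $\{c_1,\dots,c_n\}=\mathcal{A}\cap\mathcal{I}$ and $\{d_1,\dots,d_n\}=\mathcal{A}\cap\mathcal{K}$, and $\pi(\mathcal{A})=\sum_{(c,d)\in\Pi_{\mathcal{A}}}\pi(c,d)$; by convention $\pi(\mathcal{A})=0$ if $\mathcal{A}\notin\mathcal{J}_0$. For $\mathcal{A}\in\mathcal{J}$, $\Delta(\mathcal{A})=\mu(\mathcal{K}(\mathcal{A}\cap\mathcal{I}))\,\lambda(\mathcal{I}(\mathcal{A}\cap\mathcal{K}))-\lambda(\mathcal{A}\cap\mathcal{I})\,\mu(\mathcal{A}\cap\mathcal{K})$. *)

theory Defs
  imports "HOL-Analysis.Analysis"
begin

text \<open>Customer classes I and server classes K are disjoint finite subsets of a common
  type 'a. The compatibility graph is given by a relation E, where E i k means i \<sim> k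
  (i a customer class, k a server class).\<close>

definition Kset :: "'a set \<Rightarrow> ('a \<Rightarrow> 'a \<Rightarrow> bool) \<Rightarrow> 'a set \<Rightarrow> 'a set" where
  "Kset K E A = {k \<in> K. \<exists>i\<in>A. E i k}"

definition Iset :: "'a set \<Rightarrow> ('a \<Rightarrow> 'a \<Rightarrow> bool) \<Rightarrow> 'a set \<Rightarrow> 'a set" where
  "Iset I E A = {i \<in> I. \<exists>k\<in>A. E i k}"

definition graph_connected :: "'a set \<Rightarrow> 'a set \<Rightarrow> ('a \<Rightarrow> 'a \<Rightarrow> bool) \<Rightarrow> bool" where
  "graph_connected I K E \<longleftrightarrow>
     (\<forall>x\<in>I \<union> K. \<forall>y\<in>I \<union> K. (\<lambda>u v. E u v \<or> E v u)\<^sup>*\<^sup>* x y)"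

text \<open>State space: pairs of equal-length sequences of unmatched customer / server classes,
  no customer compatible with any server.\<close>
definition states :: "'a set \<Rightarrow> 'a set \<Rightarrow> ('a \<Rightarrow> 'a \<Rightarrow> bool) \<Rightarrow> ('a list \<times> 'a list) set" where
  "states I K E = {(c, d). length c = length d \<and> set c \<subseteq> I \<and> set d \<subseteq> K \<and>
                          (\<forall>p\<in>set c. \<forall>q\<in>set d. \<not> E p q)}"

definition weight :: "'a set \<Rightarrow> 'a set \<Rightarrow> ('a \<Rightarrow> 'a \<Rightarrow> bool) \<Rightarrow> ('a \<Rightarrow> real) \<Rightarrow> ('a \<Rightarrow> real)
                      \<Rightarrow> 'a list \<times> 'a list \<Rightarrow> real" where
  "weight I K E lam mu cd = (case cd of (c, d) \<Rightarrow>
     (\<Prod>p<length c. lam (c ! p) / sum mu (Kset K E (set (take (Suc p) c)))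
                   * (mu (d ! p) / sum lam (Iset I E (set (take (Suc p) d))))))"

text \<open>Stationary distribution: the product form, normalised (so pi of the empty state is the
  normalising constant); zero outside the state space.\<close>
definition pi_st :: "'a set \<Rightarrow> 'a set \<Rightarrow> ('a \<Rightarrow> 'a \<Rightarrow> bool) \<Rightarrow> ('a \<Rightarrow> real) \<Rightarrow> ('a \<Rightarrow> real)
                      \<Rightarrow> 'a list \<times> 'a list \<Rightarrow> real" where
  "pi_st I K E lam mu cd =
     (if cd \<in> states I K E
      then weight I K E lam mu cd / (\<Sum>\<^sub>\<infinity>x\<in>states I K E. weight I K E lam mu x)
      else 0)"

definition Jfam :: "'a set \<Rightarrow> 'a set \<Rightarrow> ('a \<Rightarrow> 'a \<Rightarrow> bool) \<Rightarrow> 'a set set" where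
  "Jfam I K E = {A. A \<subseteq> I \<union> K \<and> (\<forall>i\<in>A \<inter> I. \<forall>k\<in>A \<inter> K. \<not> E i k) \<and>
                    A \<inter> I \<noteq> {} \<and> A \<inter> K \<noteq> {}}"

definition J0fam :: "'a set \<Rightarrow> 'a set \<Rightarrow> ('a \<Rightarrow> 'a \<Rightarrow> bool) \<Rightarrow> 'a set set" where
  "J0fam I K E = insert {} (Jfam I K E)"

definition states_of :: "'a set \<Rightarrow> 'a set \<Rightarrow> ('a \<Rightarrow> 'a \<Rightarrow> bool) \<Rightarrow> 'a set \<Rightarrow> ('a list \<times> 'a list) set" where
  "states_of I K E A = {(c, d) \<in> states I K E. set c = A \<inter> I \<and> set d = A \<inter> K}"

definition pi_set :: "'a set \<Rightarrow> 'a set \<Rightarrow> ('a \<Rightarrow> 'a \<Rightarrow> bool) \<Rightarrow> ('a \<Rightarrow> real) \<Rightarrow> ('a \<Rightarrow> real)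
                      \<Rightarrow> 'a set \<Rightarrow> real" where
  "pi_set I K E lam mu A =
     (if A \<in> J0fam I K E then (\<Sum>\<^sub>\<infinity>x\<in>states_of I K E A. pi_st I K E lam mu x) else 0)"

definition ell :: "'a set \<Rightarrow> 'a set \<Rightarrow> ('a \<Rightarrow> 'a \<Rightarrow> bool) \<Rightarrow> ('a \<Rightarrow> real) \<Rightarrow> ('a \<Rightarrow> real)
                      \<Rightarrow> 'a \<Rightarrow> 'a set \<Rightarrow> real" where
  "ell I K E lam mu i A =
     (if A \<in> J0fam I K E
      then (\<Sum>\<^sub>\<infinity>x\<in>states_of I K E A. real (count_list (fst x) i) * pi_st I K E lam mu x)
      else 0)"

definition meanL :: "'a set \<Rightarrow> 'a set \<Rightarrow> ('a \<Rightarrow> 'a \<Rightarrow> bool) \<Rightarrow> ('a \<Rightarrow> real) \<Rightarrow> ('a \<Rightarrow> real)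
                      \<Rightarrow> 'a \<Rightarrow> real" where
  "meanL I K E lam mu i =
     (\<Sum>\<^sub>\<infinity>x\<in>states I K E. real (count_list (fst x) i) * pi_st I K E lam mu x)"

definition Delta :: "'a set \<Rightarrow> 'a set \<Rightarrow> ('a \<Rightarrow> 'a \<Rightarrow> bool) \<Rightarrow> ('a \<Rightarrow> real) \<Rightarrow> ('a \<Rightarrow> real)
                      \<Rightarrow> 'a set \<Rightarrow> real" where
  "Delta I K E lam mu A =
     sum mu (Kset K E (A \<inter> I)) * sum lam (Iset I E (A \<inter> K))
     - sum lam (A \<inter> I) * sum mu (A \<inter> K)"

end

theory Submission
  imports Defs
begin

locale bm =
  fixes I K :: "'a set" and E :: "'a \<Rightarrow> 'a \<Rightarrow> bool"
    and lam mu :: "'a \<Rightarrow> real" and i :: 'a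
  assumes finI: "finite I" and finK: "finite K"
    and neI: "I \<noteq> {}" and neK: "K \<noteq> {}" and disj: "I \<inter> K = {}"
    and bip: "\<And>x y. E x y \<Longrightarrow> x \<in> I \<and> y \<in> K"
    and conn: "graph_connected I K E"
    and lam_pos: "\<And>j. j \<in> I \<Longrightarrow> lam j > 0"
    and mu_pos: "\<And>k. k \<in> K \<Longrightarrow> mu k > 0"
    and lam_sum: "sum lam I = 1" and mu_sum: "sum mu K = 1"
    and stab: "\<And>A. A \<noteq> {} \<Longrightarrow> A \<subset> I \<Longrightarrow> sum lam A < sum mu (Kset K E A)"
    and iI: "i \<in> I"
begin

abbreviation "sto A \<equiv> states_of I K E A"
abbreviation "pst \<equiv> pi_st I K E lam mu"

lemma sto_sub: "sto A \<subseteq> states I K E"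
  by (auto simp: states_of_def)

lemma sto_unique:
  assumes "x \<in> sto A" "x \<in> sto B" "A \<subseteq> I \<union> K" "B \<subseteq> I \<union> K"
  shows "A = B"
proof -
  have "A = (A \<inter> I) \<union> (A \<inter> K)" "B = (B \<inter> I) \<union> (B \<inter> K)" using assms(3,4) by auto
  then show ?thesis using assms(1,2) by (auto simp: states_of_def split: prod.splits)
qed

lemma sto_notJ:
  assumes "B \<subseteq> I \<union> K" "B \<notin> Jfam I K E"
  shows "sto B \<subseteq> {([],[])}"
proof
  fix x assume x: "x \<in> sto B"
  obtain c d where cd: "x = (c,d)" by fastforce
  have st: "length c = length d" "set c = B \<inter> I" "set d = B \<inter> K" "\<forall>p\<in>set c. \<forall>q\<in>set d. \<not> E p q"
    using x cd by (auto simp: states_of_def states_def)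
  have "B \<inter> I = {} \<or> B \<inter> K = {}" using assms st unfolding Jfam_def by auto
  then have "c = [] \<or> d = []" using st by auto
  then have "c = [] \<and> d = []" using st(1) by auto
  then show "x \<in> {([],[])}" using cd by simp
qed

lemma sto_notJ0:
  assumes "B \<subseteq> I \<union> K" "B \<notin> J0fam I K E"
  shows "sto B = {}"
proof -
  have "B \<notin> Jfam I K E" "B \<noteq> {}" using assms by (auto simp: J0fam_def)
  then have "sto B \<subseteq> {([],[])}" using sto_notJ assms by blast
  moreover have "([],[]) \<notin> sto B" using \<open>B \<noteq> {}\<close> assms(1) by (auto simp: states_of_def)
  ultimately show ?thesis by blast
qed

lemma sto_J_len:
  assumes "A \<in> Jfam I K E" "x \<in> sto A"
  shows "fst x \<noteq> [] \<and> snd x \<noteq> []"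
  using assms by (auto simp: states_of_def Jfam_def)

lemma weight_step:
  assumes "length c = length d"
  shows "weight I K E lam mu (c @ [j], d @ [k]) = weight I K E lam mu (c, d) *
     (lam j / sum mu (Kset K E (set (c @ [j]))) * (mu k / sum lam (Iset I E (set (d @ [k])))))"
proof -
  have "(\<Prod>p<length c. lam ((c @ [j]) ! p) / sum mu (Kset K E (set (take (Suc p) (c @ [j]))))
                   * (mu ((d @ [k]) ! p) / sum lam (Iset I E (set (take (Suc p) (d @ [k]))))))
      = (\<Prod>p<length c. lam (c ! p) / sum mu (Kset K E (set (take (Suc p) c)))
                   * (mu (d ! p) / sum lam (Iset I E (set (take (Suc p) d)))))"
    using assms by (intro prod.cong) (auto simp: nth_append)
  then show ?thesis using assms
    by (simp add: weight_def prod.lessThan_Suc nth_append)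
qed

lemma nbrK: assumes "k \<in> K" shows "\<exists>j. E j k"
proof -
  obtain i0 where i0: "i0 \<in> I" using neI by blast
  have "(\<lambda>u v. E u v \<or> E v u)\<^sup>*\<^sup>* k i0" using conn assms i0 unfolding graph_connected_def by blast
  moreover have "k \<noteq> i0" using disj assms i0 by blast
  ultimately obtain v where "E k v \<or> E v k"
    by (induction rule: converse_rtranclp_induct) auto
  moreover have "\<not> E k v" using bip disj assms by blast
  ultimately show ?thesis by blast
qed

lemma nbrI: assumes "j \<in> I" shows "\<exists>k. E j k"
proof -
  obtain k0 where k0: "k0 \<in> K" using neK by blast
  have "(\<lambda>u v. E u v \<or> E v u)\<^sup>*\<^sup>* j k0" using conn assms k0 unfolding graph_connected_def by blast
  moreover have "j \<noteq> k0" using disj assms k0 by blast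
  ultimately obtain v where "E j v \<or> E v j"
    by (induction rule: converse_rtranclp_induct) auto
  moreover have "\<not> E v j" using bip disj assms by blast
  ultimately show ?thesis by blast
qed

definition aa :: "'a set \<Rightarrow> real" where
  "aa A = sum mu (Kset K E (A \<inter> I)) * sum lam (Iset I E (A \<inter> K))"
definition bb :: "'a set \<Rightarrow> real" where
  "bb A = sum lam (A \<inter> I) * sum mu (A \<inter> K)"

lemma Delta_eq: "Delta I K E lam mu A = aa A - bb A"
  by (simp add: Delta_def aa_def bb_def)

lemma stabK:
  assumes "B \<noteq> {}" "B \<subset> K"
  shows "sum mu B < sum lam (Iset I E B)"
proof -
  define C where "C = I - Iset I E B"
  have IB: "Iset I E B \<subseteq> I" by (auto simp: Iset_def)
  have lamC: "sum lam C = 1 - sum lam (Iset I E B)"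
    using sum.subset_diff[OF IB finI, of lam] lam_sum unfolding C_def by simp
  have muB: "sum mu (K - B) = 1 - sum mu B"
    using sum.subset_diff[of B K mu] assms finK mu_sum by auto
  have "Iset I E B \<noteq> {}"
  proof -
    obtain k where "k \<in> B" using assms by blast
    then obtain j where "E j k" using nbrK assms by blast
    then show ?thesis using \<open>k \<in> B\<close> bip unfolding Iset_def by blast
  qed
  then have Cne: "C \<noteq> I" unfolding C_def using IB by blast
  show ?thesis
  proof (cases "C = {}")
    case True
    then have "Iset I E B = I" using IB unfolding C_def by blast
    moreover have "sum mu B < sum mu K"
    proof -
      obtain k where "k \<in> K - B" using assms by blast
      then have "0 < sum mu (K - B)"
        using finK mu_pos by (intro sum_pos2[of _ k]) (auto intro: less_imp_le)
      then show ?thesis using muB mu_sum by simp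
    qed
    ultimately show ?thesis using lam_sum mu_sum by simp
  next
    case False
    have "sum lam C < sum mu (Kset K E C)" using stab[OF False] Cne C_def by blast
    also have "\<dots> \<le> sum mu (K - B)"
    proof (rule sum_mono2)
      show "finite (K - B)" using finK by simp
      show "Kset K E C \<subseteq> K - B" unfolding Kset_def C_def Iset_def using bip by blast
      show "\<And>b. b \<in> K - B - Kset K E C \<Longrightarrow> 0 \<le> mu b" using mu_pos by (auto intro: less_imp_le)
    qed
    finally show ?thesis using lamC muB by simp
  qed
qed

lemma J_props:
  assumes "A \<in> Jfam I K E"
  shows "A \<inter> I \<subset> I" "A \<inter> K \<subset> K" "A \<inter> I \<noteq> {}" "A \<inter> K \<noteq> {}"
proof -
  have ind: "\<And>x y. x \<in> A \<inter> I \<Longrightarrow> y \<in> A \<inter> K \<Longrightarrow> \<not> E x y"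
    using assms unfolding Jfam_def by blast
  show ne1: "A \<inter> I \<noteq> {}" and ne2: "A \<inter> K \<noteq> {}" using assms unfolding Jfam_def by blast+
  obtain k where k: "k \<in> A \<inter> K" using ne2 by blast
  obtain j where "E j k" using nbrK k by blast
  then have "j \<notin> A \<inter> I" "j \<in> I" using ind k bip by blast+
  then show "A \<inter> I \<subset> I" by blast
  obtain j2 where j2: "j2 \<in> A \<inter> I" using ne1 by blast
  obtain k2 where "E j2 k2" using nbrI j2 by blast
  then have "k2 \<notin> A \<inter> K" "k2 \<in> K" using ind j2 bip by blast+
  then show "A \<inter> K \<subset> K" by blast
qed

lemma lamA_pos: "A \<inter> I \<noteq> {} \<Longrightarrow> 0 < sum lam (A \<inter> I)"
  by (rule sum_pos) (use finI lam_pos in auto)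
lemma muA_pos: "A \<inter> K \<noteq> {} \<Longrightarrow> 0 < sum mu (A \<inter> K)"
  by (rule sum_pos) (use finK mu_pos in auto)

lemma ab_J:
  assumes "A \<in> Jfam I K E"
  shows "0 \<le> bb A" "bb A < aa A" "0 < aa A"
proof -
  note p = J_props[OF assms]
  have l1: "0 < sum lam (A \<inter> I)" by (rule lamA_pos[OF p(3)])
  have m1: "0 < sum mu (A \<inter> K)" by (rule muA_pos[OF p(4)])
  have l2: "sum lam (A \<inter> I) < sum mu (Kset K E (A \<inter> I))" by (rule stab[OF p(3) p(1)])
  have m2: "sum mu (A \<inter> K) < sum lam (Iset I E (A \<inter> K))" by (rule stabK[OF p(4) p(2)])
  show b0: "0 \<le> bb A" using l1 m1 unfolding bb_def by simp
  show "bb A < aa A" unfolding aa_def bb_def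
    by (rule mult_strict_mono[OF l2 m2]) (use l1 l2 m1 in linarith)+
  then show "0 < aa A" using b0 by linarith
qed

definition Tr :: "nat \<Rightarrow> 'a set \<Rightarrow> ('a list \<times> 'a list) set" where
  "Tr N A = {x \<in> sto A. length (fst x) \<le> N}"

definition app :: "'a \<Rightarrow> 'a \<Rightarrow> 'a list \<times> 'a list \<Rightarrow> 'a list \<times> 'a list" where
  "app j k x = (fst x @ [j], snd x @ [k])"

definition U :: "nat \<Rightarrow> 'a \<Rightarrow> 'a \<Rightarrow> 'a set \<Rightarrow> ('a list \<times> 'a list) set" where
  "U N j k A = Tr N A \<union> Tr N (A - {j}) \<union> Tr N (A - {k}) \<union> Tr N (A - {j,k})"

lemma finite_Tr: "finite (Tr N A)"
proof -
  have "Tr N A \<subseteq> {c. set c \<subseteq> I \<and> length c \<le> N} \<times> {d. set d \<subseteq> K \<and> length d \<le> N}"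
    unfolding Tr_def states_of_def states_def by auto
  moreover have "finite ({c. set c \<subseteq> I \<and> length c \<le> N} \<times> {d. set d \<subseteq> K \<and> length d \<le> N})"
    using finite_lists_length_le[OF finI] finite_lists_length_le[OF finK] by blast
  ultimately show ?thesis by (rule finite_subset)
qed

lemma finite_U: "finite (U N j k A)"
  unfolding U_def using finite_Tr by blast

lemma between4:
  assumes "A - {j,k} \<subseteq> B" "B \<subseteq> A"
  shows "B = A \<or> B = A - {j} \<or> B = A - {k} \<or> B = A - {j,k}"
proof (cases "j \<in> B"; cases "k \<in> B")
  assume "j \<in> B" "k \<in> B" then have "B = A" using assms by blast then show ?thesis by blast
next
  assume "j \<in> B" "k \<notin> B" then have "B = A - {k} \<or> B = A - {j,k}" using assms by blast
  then show ?thesis by blast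
next
  assume "j \<notin> B" "k \<in> B" then have "B = A - {j} \<or> B = A - {j,k}" using assms by blast
  then show ?thesis by blast
next
  assume "j \<notin> B" "k \<notin> B" then have "B = A - {j,k}" using assms by blast then show ?thesis by blast
qed

lemma U_iff: "x \<in> U N j k A \<longleftrightarrow> (\<exists>B. A - {j,k} \<subseteq> B \<and> B \<subseteq> A \<and> x \<in> Tr N B)"
proof
  assume "x \<in> U N j k A"
  then have "x \<in> Tr N A \<or> x \<in> Tr N (A - {j}) \<or> x \<in> Tr N (A - {k}) \<or> x \<in> Tr N (A - {j,k})"
    unfolding U_def by simp
  then show "\<exists>B. A - {j,k} \<subseteq> B \<and> B \<subseteq> A \<and> x \<in> Tr N B"
  proof (elim disjE)
    assume "x \<in> Tr N A" then show ?thesis by (intro exI[of _ A]) auto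
  next
    assume "x \<in> Tr N (A - {j})" then show ?thesis by (intro exI[of _ "A - {j}"]) auto
  next
    assume "x \<in> Tr N (A - {k})" then show ?thesis by (intro exI[of _ "A - {k}"]) auto
  next
    assume "x \<in> Tr N (A - {j,k})" then show ?thesis by (intro exI[of _ "A - {j,k}"]) auto
  qed
next
  assume "\<exists>B. A - {j,k} \<subseteq> B \<and> B \<subseteq> A \<and> x \<in> Tr N B"
  then obtain B where B: "A - {j,k} \<subseteq> B" "B \<subseteq> A" "x \<in> Tr N B" by blast
  from between4[OF B(1,2)] B(3) show "x \<in> U N j k A" unfolding U_def by auto
qed

lemma app_in:
  assumes A: "A \<in> Jfam I K E" and j: "j \<in> A \<inter> I" and k: "k \<in> A \<inter> K"
    and x: "x \<in> U N j k A"
  shows "app j k x \<in> Tr (Suc N) A"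
proof -
  from U_iff[THEN iffD1, OF x] obtain B where B: "A - {j,k} \<subseteq> B" "B \<subseteq> A" "x \<in> Tr N B" by blast
  obtain c d where cd: "x = (c,d)" by fastforce
  have st: "length c = length d" "set c = B \<inter> I" "set d = B \<inter> K" "length c \<le> N"
    using B(3) cd unfolding Tr_def states_of_def states_def by auto
  have kI: "k \<notin> I" using k disj by blast
  have jK: "j \<notin> K" using j disj by blast
  have s1: "set (c @ [j]) = A \<inter> I" using st(2) B(1,2) j kI by auto
  have s2: "set (d @ [k]) = A \<inter> K" using st(3) B(1,2) k jK by auto
  have ind: "\<forall>p\<in>A \<inter> I. \<forall>q\<in>A \<inter> K. \<not> E p q" using A unfolding Jfam_def by blast
  show ?thesis unfolding Tr_def states_of_def states_def app_def
    using s1 s2 st(1,4) ind cd by auto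
qed

lemma app_surj:
  assumes A: "A \<in> Jfam I K E" and y: "y \<in> Tr (Suc N) A"
  shows "\<exists>j k x. j \<in> A \<inter> I \<and> k \<in> A \<inter> K \<and> x \<in> U N j k A \<and> y = app j k x"
proof -
  obtain c d where cd: "y = (c,d)" by fastforce
  have st: "length c = length d" "set c = A \<inter> I" "set d = A \<inter> K" "length c \<le> Suc N"
     "\<forall>p\<in>set c. \<forall>q\<in>set d. \<not> E p q"
    using y cd unfolding Tr_def states_of_def states_def by auto
  have "c \<noteq> []" using st(2) J_props[OF A] by auto
  then obtain c' j where c: "c = c' @ [j]" by (metis rev_exhaust)
  have "d \<noteq> []" using st(3) J_props[OF A] by auto
  then obtain d' k where d: "d = d' @ [k]" by (metis rev_exhaust)
  define B where "B = set c' \<union> set d'"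
  have j: "j \<in> A \<inter> I" and k: "k \<in> A \<inter> K" using st c d by auto
  have c'I: "set c' \<subseteq> I" and d'K: "set d' \<subseteq> K" using st c d by auto
  have sB1: "set c' = B \<inter> I" using c'I d'K disj unfolding B_def by blast
  have sB2: "set d' = B \<inter> K" using c'I d'K disj unfolding B_def by blast
  have x: "(c', d') \<in> Tr N B"
    using st c d sB1 sB2 c'I d'K unfolding Tr_def states_of_def states_def by auto
  have e1: "set c' \<union> {j} = A \<inter> I" "set d' \<union> {k} = A \<inter> K" using st(2,3) c d by auto
  have AIK: "A \<subseteq> I \<union> K" using A unfolding Jfam_def by blast
  have AB: "A - {j,k} \<subseteq> B" "B \<subseteq> A" using e1 AIK unfolding B_def by blast+
  have "(c', d') \<in> U N j k A" by (rule U_iff[THEN iffD2], rule exI[of _ B]) (use AB x in simp)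
  moreover have "y = app j k (c', d')" using cd c d by (simp add: app_def)
  ultimately show ?thesis using j k by blast
qed

lemma decomp_bij:
  assumes A: "A \<in> Jfam I K E"
  shows "bij_betw (\<lambda>(jk, x). app (fst jk) (snd jk) x)
           (SIGMA jk:(A \<inter> I) \<times> (A \<inter> K). U N (fst jk) (snd jk) A) (Tr (Suc N) A)"
proof (rule bij_betw_imageI)
  show "inj_on (\<lambda>(jk, x). app (fst jk) (snd jk) x) (SIGMA jk:(A \<inter> I) \<times> (A \<inter> K). U N (fst jk) (snd jk) A)"
    by (rule inj_onI) (auto simp: app_def prod_eq_iff)
  show "(\<lambda>(jk, x). app (fst jk) (snd jk) x) ` (SIGMA jk:(A \<inter> I) \<times> (A \<inter> K). U N (fst jk) (snd jk) A) = Tr (Suc N) A"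
  proof
    show "(\<lambda>(jk, x). app (fst jk) (snd jk) x) ` (SIGMA jk:(A \<inter> I) \<times> (A \<inter> K). U N (fst jk) (snd jk) A) \<subseteq> Tr (Suc N) A"
      using app_in[OF A] by auto
    show "Tr (Suc N) A \<subseteq> (\<lambda>(jk, x). app (fst jk) (snd jk) x) ` (SIGMA jk:(A \<inter> I) \<times> (A \<inter> K). U N (fst jk) (snd jk) A)"
    proof
      fix y assume "y \<in> Tr (Suc N) A"
      then obtain j k x where "j \<in> A \<inter> I" "k \<in> A \<inter> K" "x \<in> U N j k A" "y = app j k x"
        using app_surj[OF A] by blast
      then show "y \<in> (\<lambda>(jk, x). app (fst jk) (snd jk) x) ` (SIGMA jk:(A \<inter> I) \<times> (A \<inter> K). U N (fst jk) (snd jk) A)"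
        by (intro image_eqI[of _ _ "((j,k),x)"]) auto
    qed
  qed
qed

lemma pst_states: "x \<in> states I K E \<Longrightarrow> pst x = weight I K E lam mu x / (\<Sum>\<^sub>\<infinity>y\<in>states I K E. weight I K E lam mu y)"
  by (simp add: pi_st_def)

lemma pst_app:
  assumes A: "A \<in> Jfam I K E" and j: "j \<in> A \<inter> I" and k: "k \<in> A \<inter> K"
    and x: "x \<in> U N j k A"
  shows "aa A * pst (app j k x) = lam j * mu k * pst x"
proof -
  obtain c d where cd: "x = (c,d)" by fastforce
  from U_iff[THEN iffD1, OF x] obtain B where B: "x \<in> Tr N B" by blast
  have xs: "x \<in> states I K E" using B sto_sub unfolding Tr_def by blast
  have len: "length c = length d" using xs cd unfolding states_def by simp
  have ax: "app j k x \<in> Tr (Suc N) A" by (rule app_in[OF A j k x])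
  have axs: "app j k x \<in> states I K E" using ax sto_sub unfolding Tr_def by blast
  have s1: "set (c @ [j]) = A \<inter> I" "set (d @ [k]) = A \<inter> K"
    using ax cd unfolding Tr_def states_of_def app_def by auto
  define Z where "Z = (\<Sum>\<^sub>\<infinity>y\<in>states I K E. weight I K E lam mu y)"
  have a0: "aa A \<noteq> 0" using ab_J[OF A] by simp
  have w: "weight I K E lam mu (app j k x) = weight I K E lam mu x * (lam j * mu k / aa A)"
    using weight_step[OF len, of j k] s1 cd unfolding app_def aa_def by simp
  have "aa A * pst (app j k x) = aa A * (weight I K E lam mu x * (lam j * mu k / aa A)) / Z"
    using pst_states[OF axs] w unfolding Z_def by simp
  also have "\<dots> = lam j * mu k * (weight I K E lam mu x / Z)" using a0 by (simp add: field_simps)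
  also have "\<dots> = lam j * mu k * pst x" using pst_states[OF xs] unfolding Z_def by simp
  finally show ?thesis .
qed

lemma Tr_disj:
  assumes "B \<subseteq> I \<union> K" "B' \<subseteq> I \<union> K" "B \<noteq> B'"
  shows "Tr N B \<inter> Tr N' B' = {}"
  using sto_unique[OF _ _ assms(1,2)] assms(3) unfolding Tr_def by blast

lemma sum_U:
  assumes A: "A \<in> Jfam I K E" and j: "j \<in> A \<inter> I" and k: "k \<in> A \<inter> K"
  shows "(\<Sum>x\<in>U N j k A. g x) = (\<Sum>x\<in>Tr N A. g x) + (\<Sum>x\<in>Tr N (A - {j}). g x)
      + (\<Sum>x\<in>Tr N (A - {k}). g x) + (\<Sum>x\<in>Tr N (A - {j,k}). g x)"
proof -
  have AIK: "A \<subseteq> I \<union> K" using A unfolding Jfam_def by blast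
  have jk: "j \<noteq> k" using j k disj by blast
  have d1: "Tr N A \<inter> Tr N (A - {j}) = {}" by (rule Tr_disj) (use AIK j in auto)
  have d2: "(Tr N A \<union> Tr N (A - {j})) \<inter> Tr N (A - {k}) = {}"
    using Tr_disj[of A "A - {k}" N N] Tr_disj[of "A - {j}" "A - {k}" N N] AIK j k jk by blast
  have d3: "(Tr N A \<union> Tr N (A - {j}) \<union> Tr N (A - {k})) \<inter> Tr N (A - {j,k}) = {}"
    using Tr_disj[of A "A - {j,k}" N N] Tr_disj[of "A - {j}" "A - {j,k}" N N]
      Tr_disj[of "A - {k}" "A - {j,k}" N N] AIK j k jk by blast
  show ?thesis unfolding U_def
    by (simp add: sum.union_disjoint finite_Tr d1 d2 d3)
qed

lemma sum_step:
  assumes A: "A \<in> Jfam I K E"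
  shows "aa A * (\<Sum>x\<in>Tr (Suc N) A. \<phi> x * pst x) =
    (\<Sum>j\<in>A \<inter> I. \<Sum>k\<in>A \<inter> K. lam j * mu k * (\<Sum>x\<in>U N j k A. \<phi> (app j k x) * pst x))"
proof -
  let ?g = "\<lambda>y. \<phi> y * pst y"
  have "(\<Sum>x\<in>Tr (Suc N) A. ?g x) =
      (\<Sum>z\<in>(SIGMA jk:(A \<inter> I) \<times> (A \<inter> K). U N (fst jk) (snd jk) A). ?g ((\<lambda>(jk, x). app (fst jk) (snd jk) x) z))"
    by (rule sum.reindex_bij_betw[OF decomp_bij[OF A], symmetric])
  also have "\<dots> = (\<Sum>jk\<in>(A \<inter> I) \<times> (A \<inter> K). \<Sum>x\<in>U N (fst jk) (snd jk) A. ?g (app (fst jk) (snd jk) x))"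
    by (subst sum.Sigma) (auto simp: finite_U finI finK intro!: sum.cong split: prod.splits)
  also have "\<dots> = (\<Sum>j\<in>A \<inter> I. \<Sum>k\<in>A \<inter> K. \<Sum>x\<in>U N j k A. ?g (app j k x))"
    by (subst sum.cartesian_product) (simp add: case_prod_unfold)
  finally have e: "(\<Sum>x\<in>Tr (Suc N) A. ?g x) = (\<Sum>j\<in>A \<inter> I. \<Sum>k\<in>A \<inter> K. \<Sum>x\<in>U N j k A. ?g (app j k x))" .
  have "aa A * (\<Sum>x\<in>Tr (Suc N) A. ?g x) = (\<Sum>j\<in>A \<inter> I. \<Sum>k\<in>A \<inter> K. \<Sum>x\<in>U N j k A. \<phi> (app j k x) * (aa A * pst (app j k x)))"
    unfolding e by (simp add: sum_distrib_left mult.assoc mult.left_commute)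
  also have "\<dots> = (\<Sum>j\<in>A \<inter> I. \<Sum>k\<in>A \<inter> K. \<Sum>x\<in>U N j k A. \<phi> (app j k x) * (lam j * mu k * pst x))"
    by (intro sum.cong refl) (simp add: pst_app[OF A])
  also have "\<dots> = (\<Sum>j\<in>A \<inter> I. \<Sum>k\<in>A \<inter> K. lam j * mu k * (\<Sum>x\<in>U N j k A. \<phi> (app j k x) * pst x))"
    by (simp add: sum_distrib_left mult.assoc mult.left_commute)
  finally show ?thesis .
qed

definition P :: "nat \<Rightarrow> 'a set \<Rightarrow> real" where
  "P N B = (\<Sum>x\<in>Tr N B. pst x)"
definition L :: "nat \<Rightarrow> 'a set \<Rightarrow> real" where
  "L N B = (\<Sum>x\<in>Tr N B. real (count_list (fst x) i) * pst x)"

lemma recP: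
  assumes A: "A \<in> Jfam I K E"
  shows "aa A * P (Suc N) A = (\<Sum>j\<in>A \<inter> I. \<Sum>k\<in>A \<inter> K. lam j * mu k *
     (P N A + P N (A - {j}) + P N (A - {k}) + P N (A - {j,k})))"
proof -
  have "aa A * P (Suc N) A = (\<Sum>j\<in>A \<inter> I. \<Sum>k\<in>A \<inter> K. lam j * mu k * (\<Sum>x\<in>U N j k A. 1 * pst x))"
    using sum_step[OF A, where N=N and \<phi>="\<lambda>_. 1"] unfolding P_def by simp
  also have "\<dots> = (\<Sum>j\<in>A \<inter> I. \<Sum>k\<in>A \<inter> K. lam j * mu k *
     (P N A + P N (A - {j}) + P N (A - {k}) + P N (A - {j,k})))"
    by (intro sum.cong refl) (simp add: sum_U[OF A] P_def)
  finally show ?thesis .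
qed

lemma recL:
  assumes A: "A \<in> Jfam I K E"
  shows "aa A * L (Suc N) A = (\<Sum>j\<in>A \<inter> I. \<Sum>k\<in>A \<inter> K. lam j * mu k *
     ((L N A + L N (A - {j}) + L N (A - {k}) + L N (A - {j,k}))
      + of_bool (j = i) * (P N A + P N (A - {j}) + P N (A - {k}) + P N (A - {j,k}))))"
proof -
  have "aa A * L (Suc N) A = (\<Sum>j\<in>A \<inter> I. \<Sum>k\<in>A \<inter> K. lam j * mu k *
      (\<Sum>x\<in>U N j k A. real (count_list (fst (app j k x)) i) * pst x))"
    using sum_step[OF A, where N=N and \<phi>="\<lambda>x. real (count_list (fst x) i)"] unfolding L_def by simp
  also have "\<dots> = (\<Sum>j\<in>A \<inter> I. \<Sum>k\<in>A \<inter> K. lam j * mu k *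
      ((\<Sum>x\<in>U N j k A. real (count_list (fst x) i) * pst x) + of_bool (j = i) * (\<Sum>x\<in>U N j k A. pst x)))"
    by (intro sum.cong refl) (simp add: app_def algebra_simps sum.distrib sum_distrib_left)
  also have "\<dots> = (\<Sum>j\<in>A \<inter> I. \<Sum>k\<in>A \<inter> K. lam j * mu k *
     ((L N A + L N (A - {j}) + L N (A - {k}) + L N (A - {j,k}))
      + of_bool (j = i) * (P N A + P N (A - {j}) + P N (A - {k}) + P N (A - {j,k}))))"
    by (intro sum.cong refl) (simp add: sum_U[OF A] P_def L_def)
  finally show ?thesis .
qed

lemma weight_nonneg:
  assumes "x \<in> states I K E" shows "0 \<le> weight I K E lam mu x"
proof -
  obtain c d where cd: "x = (c,d)" by fastforce
  have st: "length c = length d" "set c \<subseteq> I" "set d \<subseteq> K" using assms cd unfolding states_def by auto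
  have "0 \<le> lam (c ! p) / sum mu (Kset K E (set (take (Suc p) c)))
                   * (mu (d ! p) / sum lam (Iset I E (set (take (Suc p) d))))" if "p < length c" for p
  proof -
    have "c ! p \<in> I" "d ! p \<in> K" using st that nth_mem by (metis subsetD, metis subsetD)
    then have "0 \<le> lam (c ! p)" "0 \<le> mu (d ! p)" using lam_pos mu_pos by (auto intro: less_imp_le)
    moreover have "0 \<le> sum mu (Kset K E (set (take (Suc p) c)))"
      by (rule sum_nonneg) (use mu_pos in \<open>auto simp: Kset_def intro: less_imp_le\<close>)
    moreover have "0 \<le> sum lam (Iset I E (set (take (Suc p) d)))"
      by (rule sum_nonneg) (use lam_pos in \<open>auto simp: Iset_def intro: less_imp_le\<close>)
    ultimately show ?thesis by simp
  qed
  then show ?thesis unfolding weight_def cd case_prod_conv by (intro prod_nonneg) simp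
qed

lemma pst_nonneg: "0 \<le> pst x"
proof (cases "x \<in> states I K E")
  case True
  have "0 \<le> (\<Sum>\<^sub>\<infinity>y\<in>states I K E. weight I K E lam mu y)"
    by (rule infsum_nonneg) (rule weight_nonneg)
  then show ?thesis using True weight_nonneg[OF True] by (simp add: pst_states)
next
  case False then show ?thesis by (simp add: pi_st_def)
qed

lemma Tr_mono: "N \<le> M \<Longrightarrow> Tr N B \<subseteq> Tr M B"
  unfolding Tr_def by auto

lemma fin_sub_Tr:
  assumes "finite X" "X \<subseteq> sto B" "(\<Sum>x\<in>X. length (fst x)) \<le> N"
  shows "X \<subseteq> Tr N B"
proof
  fix x assume x: "x \<in> X"
  have "length (fst x) \<le> (\<Sum>x\<in>X. length (fst x))" by (rule member_le_sum) (use assms x in auto)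
  then show "x \<in> Tr N B" using assms x unfolding Tr_def by auto
qed

lemma summable_from_bound:
  fixes h :: "'a list \<times> 'a list \<Rightarrow> real"
  assumes bnd: "\<And>N. (\<Sum>x\<in>Tr N B. h x) \<le> C" and nn: "\<And>x. x \<in> sto B \<Longrightarrow> 0 \<le> h x"
  shows "h summable_on sto B"
proof (rule nonneg_bdd_above_summable_on)
  show "\<And>x. x \<in> sto B \<Longrightarrow> 0 \<le> h x" by (rule nn)
  show "bdd_above (sum h ` {F. F \<subseteq> sto B \<and> finite F})"
  proof (rule bdd_aboveI)
    fix y assume "y \<in> sum h ` {F. F \<subseteq> sto B \<and> finite F}"
    then obtain F where F: "F \<subseteq> sto B" "finite F" "y = sum h F" by blast
    have sub: "F \<subseteq> Tr (\<Sum>x\<in>F. length (fst x)) B" by (rule fin_sub_Tr) (use F in auto)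
    have "sum h F \<le> sum h (Tr (\<Sum>x\<in>F. length (fst x)) B)"
      by (rule sum_mono2[OF finite_Tr sub]) (use nn in \<open>auto simp: Tr_def\<close>)
    also have "\<dots> \<le> C" by (rule bnd)
    finally show "y \<le> C" using F by simp
  qed
qed

lemma Tr_tendsto:
  fixes h :: "'a list \<times> 'a list \<Rightarrow> real"
  assumes "h summable_on sto B"
  shows "(\<lambda>N. \<Sum>x\<in>Tr N B. h x) \<longlonglongrightarrow> infsum h (sto B)"
proof -
  have hs: "(sum h \<longlongrightarrow> infsum h (sto B)) (finite_subsets_at_top (sto B))"
    using has_sum_infsum[OF assms] unfolding has_sum_def .
  have fl: "filterlim (\<lambda>N. Tr N B) (finite_subsets_at_top (sto B)) sequentially"
    unfolding filterlim_def le_filter_def eventually_filtermap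
  proof (intro allI impI)
    fix Q assume "eventually Q (finite_subsets_at_top (sto B))"
    then obtain X where X: "finite X" "X \<subseteq> sto B" "\<And>Y. finite Y \<and> X \<subseteq> Y \<and> Y \<subseteq> sto B \<Longrightarrow> Q Y"
      unfolding eventually_finite_subsets_at_top by blast
    show "eventually (\<lambda>N. Q (Tr N B)) sequentially"
    proof (rule eventually_sequentiallyI[of "\<Sum>x\<in>X. length (fst x)"])
      fix N assume "(\<Sum>x\<in>X. length (fst x)) \<le> N"
      then have "X \<subseteq> Tr N B" using fin_sub_Tr X by blast
      moreover have "Tr N B \<subseteq> sto B" unfolding Tr_def by blast
      ultimately show "Q (Tr N B)" using X(3) finite_Tr by blast
    qed
  qed
  show ?thesis using filterlim_compose[OF hs fl] by simp
qed

lemma sum_lm_split: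
  "(\<Sum>j\<in>S. \<Sum>k\<in>T. lam j * mu k * (a + r j k)) =
    a * (sum lam S * sum mu T) + (\<Sum>j\<in>S. \<Sum>k\<in>T. lam j * mu k * r j k)"
proof -
  have "(\<Sum>j\<in>S. \<Sum>k\<in>T. lam j * mu k * (a + r j k)) =
      (\<Sum>j\<in>S. \<Sum>k\<in>T. a * (lam j * mu k)) + (\<Sum>j\<in>S. \<Sum>k\<in>T. lam j * mu k * r j k)"
    unfolding sum.distrib[symmetric] by (simp add: algebra_simps)
  moreover have "(\<Sum>j\<in>S. \<Sum>k\<in>T. a * (lam j * mu k)) = a * (sum lam S * sum mu T)"
    by (simp only: sum_product) (simp add: sum_distrib_left)
  ultimately show ?thesis by simp
qed

lemma sum_lm_mono:
  assumes "\<And>j k. j \<in> S \<Longrightarrow> k \<in> T \<Longrightarrow> X j k \<le> Y j k" "S \<subseteq> I" "T \<subseteq> K"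
  shows "(\<Sum>j\<in>S. \<Sum>k\<in>T. lam j * mu k * X j k) \<le> (\<Sum>j\<in>S. \<Sum>k\<in>T. lam j * mu k * Y j k)"
proof (intro sum_mono mult_left_mono)
  fix j k assume jk: "j \<in> S" "k \<in> T"
  show "X j k \<le> Y j k" by (rule assms(1)[OF jk])
  have "0 < lam j" "0 < mu k" using jk assms(2,3) lam_pos mu_pos by auto
  then show "0 \<le> lam j * mu k" by simp
qed

abbreviation "Q B \<equiv> infsum pst (sto B)"
abbreviation "M B \<equiv> infsum (\<lambda>x. real (count_list (fst x) i) * pst x) (sto B)"

lemma P_nonneg: "0 \<le> P N B"
  unfolding P_def by (rule sum_nonneg) (rule pst_nonneg)

lemma P_mono: "P N B \<le> P (Suc N) B"
  unfolding P_def by (rule sum_mono2[OF finite_Tr Tr_mono]) (auto simp: pst_nonneg)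

lemma L_mono: "L N B \<le> L (Suc N) B"
  unfolding L_def by (rule sum_mono2[OF finite_Tr Tr_mono]) (auto simp: pst_nonneg)

lemma P_le_Q: "pst summable_on sto B \<Longrightarrow> P N B \<le> Q B"
  unfolding P_def by (rule finite_sum_le_infsum) (use finite_Tr[of N B] in \<open>auto simp: Tr_def pst_nonneg\<close>)

lemma L_le_M: "(\<lambda>x. real (count_list (fst x) i) * pst x) summable_on sto B \<Longrightarrow> L N B \<le> M B"
  unfolding L_def by (rule finite_sum_le_infsum) (use finite_Tr[of N B] in \<open>auto simp: Tr_def pst_nonneg\<close>)

lemma finite_IK: "finite (I \<union> K)" using finI finK by simp

lemma sub_cases:
  assumes "B \<in> Jfam I K E" "j \<in> B \<inter> I" "k \<in> B \<inter> K"
  shows "B - {j} \<subset> B" "B - {k} \<subset> B" "B - {j,k} \<subset> B"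
    "B - {j} \<subseteq> I \<union> K" "B - {k} \<subseteq> I \<union> K" "B - {j,k} \<subseteq> I \<union> K"
  using assms unfolding Jfam_def by auto

lemma bound_lemma:
  fixes p :: "nat \<Rightarrow> real"
  assumes "\<And>N. aa B * p (Suc N) \<le> bb B * p (Suc N) + R" "\<And>N. p N \<le> p (Suc N)" "bb B < aa B"
  shows "p N \<le> R / (aa B - bb B)"
proof -
  have "(aa B - bb B) * p (Suc N) \<le> R" using assms(1)[of N] by (simp add: algebra_simps)
  then have "p (Suc N) \<le> R / (aa B - bb B)" using assms(3) by (simp add: pos_le_divide_eq mult.commute)
  then show ?thesis using assms(2)[of N] by linarith
qed

lemma sumP: "B \<subseteq> I \<union> K \<Longrightarrow> pst summable_on sto B"
proof (induction "card B" arbitrary: B rule: less_induct)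
  case less
  show ?case
  proof (cases "B \<in> Jfam I K E")
    case False
    then have "sto B \<subseteq> {([],[])}" using sto_notJ less.prems by blast
    then have "finite (sto B)" by (rule finite_subset) simp
    then show ?thesis by (rule summable_on_finite)
  next
    case True
    have finB: "finite B" using less.prems finite_IK finite_subset by blast
    have IH: "pst summable_on sto B'" if "B' \<subset> B" "B' \<subseteq> I \<union> K" for B'
      using less.hyps[OF psubset_card_mono[OF finB that(1)] that(2)] .
    define R where "R = (\<Sum>j\<in>B \<inter> I. \<Sum>k\<in>B \<inter> K. lam j * mu k * (Q (B - {j}) + Q (B - {k}) + Q (B - {j,k})))"
    have step: "aa B * P (Suc N) B \<le> bb B * P (Suc N) B + R" for N
    proof -
      have "aa B * P (Suc N) B = (\<Sum>j\<in>B \<inter> I. \<Sum>k\<in>B \<inter> K. lam j * mu k *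
         (P N B + (P N (B - {j}) + P N (B - {k}) + P N (B - {j,k}))))"
        unfolding recP[OF True] by (simp add: add.assoc)
      also have "\<dots> \<le> (\<Sum>j\<in>B \<inter> I. \<Sum>k\<in>B \<inter> K. lam j * mu k *
         (P (Suc N) B + (Q (B - {j}) + Q (B - {k}) + Q (B - {j,k}))))"
      proof (rule sum_lm_mono)
        fix j k assume jk: "j \<in> B \<inter> I" "k \<in> B \<inter> K"
        note sc = sub_cases[OF True jk]
        show "P N B + (P N (B - {j}) + P N (B - {k}) + P N (B - {j, k})) \<le>
              P (Suc N) B + (Q (B - {j}) + Q (B - {k}) + Q (B - {j,k}))"
          using P_mono[of N B] P_le_Q[OF IH[OF sc(1) sc(4)], of N] P_le_Q[OF IH[OF sc(2) sc(5)], of N]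
            P_le_Q[OF IH[OF sc(3) sc(6)], of N] by linarith
      qed auto
      also have "\<dots> = bb B * P (Suc N) B + R"
        unfolding sum_lm_split R_def bb_def by (simp add: mult.commute)
      finally show ?thesis .
    qed
    have bnd: "P N B \<le> R / (aa B - bb B)" for N
      by (rule bound_lemma[where p="\<lambda>N. P N B", OF step P_mono ab_J(2)[OF True]])
    show ?thesis
      by (rule summable_from_bound[where C="R / (aa B - bb B)"]) (use bnd in \<open>auto simp: P_def pst_nonneg\<close>)
  qed
qed

lemma sumL: "B \<subseteq> I \<union> K \<Longrightarrow> (\<lambda>x. real (count_list (fst x) i) * pst x) summable_on sto B"
proof (induction "card B" arbitrary: B rule: less_induct)
  case less
  show ?case
  proof (cases "B \<in> Jfam I K E")
    case False
    then have "sto B \<subseteq> {([],[])}" using sto_notJ less.prems by blast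
    then have "finite (sto B)" by (rule finite_subset) simp
    then show ?thesis by (rule summable_on_finite)
  next
    case True
    have finB: "finite B" using less.prems finite_IK finite_subset by blast
    have IH: "(\<lambda>x. real (count_list (fst x) i) * pst x) summable_on sto B'" if "B' \<subset> B" "B' \<subseteq> I \<union> K" for B'
      using less.hyps[OF psubset_card_mono[OF finB that(1)] that(2)] .
    define R where "R = (\<Sum>j\<in>B \<inter> I. \<Sum>k\<in>B \<inter> K. lam j * mu k * ((M (B - {j}) + M (B - {k}) + M (B - {j,k}))
       + of_bool (j = i) * (Q B + Q (B - {j}) + Q (B - {k}) + Q (B - {j,k}))))"
    have step: "aa B * L (Suc N) B \<le> bb B * L (Suc N) B + R" for N
    proof -
      have "aa B * L (Suc N) B = (\<Sum>j\<in>B \<inter> I. \<Sum>k\<in>B \<inter> K. lam j * mu k *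
         (L N B + ((L N (B - {j}) + L N (B - {k}) + L N (B - {j,k}))
          + of_bool (j = i) * (P N B + P N (B - {j}) + P N (B - {k}) + P N (B - {j,k})))))"
        unfolding recL[OF True] by (simp add: add.assoc)
      also have "\<dots> \<le> (\<Sum>j\<in>B \<inter> I. \<Sum>k\<in>B \<inter> K. lam j * mu k *
         (L (Suc N) B + ((M (B - {j}) + M (B - {k}) + M (B - {j,k}))
       + of_bool (j = i) * (Q B + Q (B - {j}) + Q (B - {k}) + Q (B - {j,k})))))"
      proof (rule sum_lm_mono)
        fix j k assume jk: "j \<in> B \<inter> I" "k \<in> B \<inter> K"
        note sc = sub_cases[OF True jk]
        have "P N B + P N (B - {j}) + P N (B - {k}) + P N (B - {j,k}) \<le> Q B + Q (B - {j}) + Q (B - {k}) + Q (B - {j,k})"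
          using P_le_Q[OF sumP[OF less.prems], of N] P_le_Q[OF sumP[OF sc(4)], of N]
            P_le_Q[OF sumP[OF sc(5)], of N] P_le_Q[OF sumP[OF sc(6)], of N] by linarith
        then have "of_bool (j = i) * (P N B + P N (B - {j}) + P N (B - {k}) + P N (B - {j,k})) \<le>
            of_bool (j = i) * (Q B + Q (B - {j}) + Q (B - {k}) + Q (B - {j,k}))"
          by (rule mult_left_mono) simp
        then show "L N B + ((L N (B - {j}) + L N (B - {k}) + L N (B - {j,k}))
          + of_bool (j = i) * (P N B + P N (B - {j}) + P N (B - {k}) + P N (B - {j,k}))) \<le>
              L (Suc N) B + ((M (B - {j}) + M (B - {k}) + M (B - {j,k}))
       + of_bool (j = i) * (Q B + Q (B - {j}) + Q (B - {k}) + Q (B - {j,k})))"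
          using L_mono[of N B] L_le_M[OF IH[OF sc(1) sc(4)], of N] L_le_M[OF IH[OF sc(2) sc(5)], of N]
            L_le_M[OF IH[OF sc(3) sc(6)], of N] by linarith
      qed auto
      also have "\<dots> = bb B * L (Suc N) B + R"
        unfolding sum_lm_split R_def bb_def by (simp add: mult.commute)
      finally show ?thesis .
    qed
    have bnd: "L N B \<le> R / (aa B - bb B)" for N
      by (rule bound_lemma[where p="\<lambda>N. L N B", OF step L_mono ab_J(2)[OF True]])
    show ?thesis
      by (rule summable_from_bound[where C="R / (aa B - bb B)"]) (use bnd in \<open>auto simp: L_def pst_nonneg\<close>)
  qed
qed

lemma tP: "B \<subseteq> I \<union> K \<Longrightarrow> (\<lambda>N. P N B) \<longlonglongrightarrow> Q B"
  unfolding P_def by (rule Tr_tendsto[OF sumP])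
lemma tL: "B \<subseteq> I \<union> K \<Longrightarrow> (\<lambda>N. L N B) \<longlonglongrightarrow> M B"
  unfolding L_def by (rule Tr_tendsto[OF sumL])

lemma limM:
  assumes A: "A \<in> Jfam I K E"
  shows "aa A * M A = (\<Sum>j\<in>A \<inter> I. \<Sum>k\<in>A \<inter> K. lam j * mu k *
     ((M A + M (A - {j}) + M (A - {k}) + M (A - {j,k}))
      + of_bool (j = i) * (Q A + Q (A - {j}) + Q (A - {k}) + Q (A - {j,k}))))"
proof -
  have AIK: "A \<subseteq> I \<union> K" using A unfolding Jfam_def by blast
  have sub: "A - X \<subseteq> I \<union> K" for X using AIK by blast
  have l1: "(\<lambda>N. aa A * L (Suc N) A) \<longlonglongrightarrow> aa A * M A"
    by (intro tendsto_mult_left LIMSEQ_Suc tL AIK)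
  have l2: "(\<lambda>N. aa A * L (Suc N) A) \<longlonglongrightarrow> (\<Sum>j\<in>A \<inter> I. \<Sum>k\<in>A \<inter> K. lam j * mu k *
     ((M A + M (A - {j}) + M (A - {k}) + M (A - {j,k}))
      + of_bool (j = i) * (Q A + Q (A - {j}) + Q (A - {k}) + Q (A - {j,k}))))"
    unfolding recL[OF A]
    by (intro tendsto_sum tendsto_mult_left tendsto_add tL tP AIK sub)
  show ?thesis using LIMSEQ_unique[OF l1 l2] .
qed

lemma final_alg:
  fixes m q :: "'a set \<Rightarrow> real"
  assumes iS: "i \<in> S" and fS: "finite S" and fT: "finite T"
  shows "(\<Sum>j\<in>S. \<Sum>k\<in>T. lam j * mu k * ((m (A - {j}) + m (A - {k}) + m (A - {j,k}))
            + of_bool (j = i) * (q A + q (A - {j}) + q (A - {k}) + q (A - {j,k}))))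
   = lam i * sum mu T * (q A + q (A - {i})) + lam i * (\<Sum>k\<in>T. mu k * (q (A - {k}) + q (A - {i,k})))
     + sum mu T * (\<Sum>j\<in>S. lam j * m (A - {j})) + sum lam S * (\<Sum>k\<in>T. mu k * m (A - {k}))
     + (\<Sum>j\<in>S. \<Sum>k\<in>T. lam j * mu k * m (A - {j,k}))"
proof -
  have e0: "(\<Sum>j\<in>S. \<Sum>k\<in>T. lam j * mu k * ((m (A - {j}) + m (A - {k}) + m (A - {j,k}))
            + of_bool (j = i) * (q A + q (A - {j}) + q (A - {k}) + q (A - {j,k}))))
     = (\<Sum>j\<in>S. \<Sum>k\<in>T. lam j * mu k * m (A - {j})) + (\<Sum>j\<in>S. \<Sum>k\<in>T. lam j * mu k * m (A - {k}))
       + (\<Sum>j\<in>S. \<Sum>k\<in>T. lam j * mu k * m (A - {j,k}))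
       + (\<Sum>j\<in>S. of_bool (j = i) * (\<Sum>k\<in>T. lam j * mu k * (q A + q (A - {j}) + q (A - {k}) + q (A - {j,k}))))"
    unfolding sum.distrib[symmetric] sum_distrib_left by (intro sum.cong refl) (simp add: algebra_simps)
  have e1: "(\<Sum>j\<in>S. \<Sum>k\<in>T. lam j * mu k * m (A - {j})) = sum mu T * (\<Sum>j\<in>S. lam j * m (A - {j}))"
    by (simp add: sum_distrib_left sum_distrib_right algebra_simps)
  have e2: "(\<Sum>j\<in>S. \<Sum>k\<in>T. lam j * mu k * m (A - {k})) = sum lam S * (\<Sum>k\<in>T. mu k * m (A - {k}))"
    by (simp add: sum_distrib_left sum_distrib_right algebra_simps) (rule sum.swap)
  have e3: "(\<Sum>j\<in>S. of_bool (j = i) * (\<Sum>k\<in>T. lam j * mu k * (q A + q (A - {j}) + q (A - {k}) + q (A - {j,k}))))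
       = (\<Sum>k\<in>T. lam i * mu k * (q A + q (A - {i}) + q (A - {k}) + q (A - {i,k})))"
  proof -
    have "(\<Sum>j\<in>S. of_bool (j = i) * (\<Sum>k\<in>T. lam j * mu k * (q A + q (A - {j}) + q (A - {k}) + q (A - {j,k}))))
      = (\<Sum>j\<in>S. if j = i then (\<Sum>k\<in>T. lam j * mu k * (q A + q (A - {j}) + q (A - {k}) + q (A - {j,k}))) else 0)"
      by (intro sum.cong refl) simp
    also have "\<dots> = (\<Sum>k\<in>T. lam i * mu k * (q A + q (A - {i}) + q (A - {k}) + q (A - {i,k})))"
      using sum.delta[OF fS, of i] iS by simp
    finally show ?thesis .
  qed
  have e4: "(\<Sum>k\<in>T. lam i * mu k * (q A + q (A - {i}) + q (A - {k}) + q (A - {i,k})))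
     = lam i * sum mu T * (q A + q (A - {i})) + lam i * (\<Sum>k\<in>T. mu k * (q (A - {k}) + q (A - {i,k})))"
    by (simp add: sum_distrib_left sum_distrib_right algebra_simps sum.distrib)
  show ?thesis unfolding e0 e1 e2 e3 e4 by simp
qed

lemma pi_set_eq: "B \<subseteq> I \<union> K \<Longrightarrow> pi_set I K E lam mu B = Q B"
  unfolding pi_set_def using sto_notJ0[of B] by auto

lemma ell_eq: "B \<subseteq> I \<union> K \<Longrightarrow> ell I K E lam mu i B = M B"
  unfolding ell_def using sto_notJ0[of B] by auto

lemma J0_sub: "A \<in> J0fam I K E \<Longrightarrow> A \<subseteq> I \<union> K"
  unfolding J0fam_def Jfam_def by auto

lemma states_Union: "states I K E = (\<Union>A\<in>J0fam I K E. sto A)"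
proof
  show "(\<Union>A\<in>J0fam I K E. sto A) \<subseteq> states I K E" using sto_sub by blast
  show "states I K E \<subseteq> (\<Union>A\<in>J0fam I K E. sto A)"
  proof
    fix x assume x: "x \<in> states I K E"
    obtain c d where cd: "x = (c,d)" by fastforce
    have st: "length c = length d" "set c \<subseteq> I" "set d \<subseteq> K" "\<forall>p\<in>set c. \<forall>q\<in>set d. \<not> E p q"
      using x cd unfolding states_def by auto
    define A where "A = set c \<union> set d"
    have s1: "set c = A \<inter> I" "set d = A \<inter> K" using st disj unfolding A_def by auto
    have "A \<in> J0fam I K E"
    proof (cases "c = []")
      case True then have "d = []" using st(1) by simp
      then show ?thesis using True unfolding A_def J0fam_def by simp
    next
      case False then have "d \<noteq> []" using st(1) by auto
      then show ?thesis using False st s1 unfolding J0fam_def Jfam_def A_def by auto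
    qed
    moreover have "x \<in> sto A" using x cd s1 unfolding states_of_def by auto
    ultimately show "x \<in> (\<Union>A\<in>J0fam I K E. sto A)" by blast
  qed
qed

lemma finite_J0: "finite (J0fam I K E)"
proof -
  have "J0fam I K E \<subseteq> Pow (I \<union> K)" using J0_sub by blast
  then show ?thesis using finite_IK by (meson finite_Pow_iff finite_subset)
qed

lemma conj1: "meanL I K E lam mu i = (\<Sum>A\<in>J0fam I K E. ell I K E lam mu i A)"
proof -
  have "(\<Sum>A\<in>J0fam I K E. ell I K E lam mu i A) = (\<Sum>A\<in>J0fam I K E. M A)"
    by (intro sum.cong refl) (simp add: ell_eq J0_sub)
  also have "\<dots> = infsum (\<lambda>x. real (count_list (fst x) i) * pst x) (\<Union>A\<in>J0fam I K E. sto A)"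
  proof (rule sum_infsum[OF finite_J0])
    show "\<And>A. A \<in> J0fam I K E \<Longrightarrow> (\<lambda>x. real (count_list (fst x) i) * pst x) summable_on sto A"
      using sumL J0_sub by blast
    show "\<And>a a'. a \<in> J0fam I K E \<Longrightarrow> a' \<in> J0fam I K E \<Longrightarrow> a \<noteq> a' \<Longrightarrow> sto a \<inter> sto a' = {}"
      using sto_unique J0_sub by blast
  qed
  finally show ?thesis unfolding meanL_def states_Union by simp
qed

lemma conj2: "i \<notin> A \<Longrightarrow> ell I K E lam mu i A = 0"
proof -
  assume iA: "i \<notin> A"
  have "(\<Sum>\<^sub>\<infinity>x\<in>sto A. real (count_list (fst x) i) * pst x) = (\<Sum>\<^sub>\<infinity>x\<in>sto A. 0)"
  proof (rule infsum_cong)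
    fix x assume "x \<in> sto A"
    then have "i \<notin> set (fst x)" using iA unfolding states_of_def by auto
    then show "real (count_list (fst x) i) * pst x = 0" by (simp add: count_list_0_iff)
  qed
  then show ?thesis unfolding ell_def by simp
qed

lemma conj3:
  assumes A: "A \<in> Jfam I K E" and iA: "i \<in> A"
  shows "Delta I K E lam mu A * ell I K E lam mu i A =
        lam i * sum mu (A \<inter> K) * (pi_set I K E lam mu A + pi_set I K E lam mu (A - {i}))
      + lam i * (\<Sum>k\<in>A \<inter> K. mu k * (pi_set I K E lam mu (A - {k}) + pi_set I K E lam mu (A - {i, k})))
      + sum mu (A \<inter> K) * (\<Sum>j\<in>A \<inter> I. lam j * ell I K E lam mu i (A - {j}))
      + sum lam (A \<inter> I) * (\<Sum>k\<in>A \<inter> K. mu k * ell I K E lam mu i (A - {k}))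
      + (\<Sum>j\<in>A \<inter> I. \<Sum>k\<in>A \<inter> K. lam j * mu k * ell I K E lam mu i (A - {j, k}))"
proof -
  have AIK: "A \<subseteq> I \<union> K" using A unfolding Jfam_def by blast
  have sub: "A - X \<subseteq> I \<union> K" for X using AIK by blast
  have ps: "pi_set I K E lam mu (A - X) = Q (A - X)" for X by (rule pi_set_eq[OF sub])
  have es: "ell I K E lam mu i (A - X) = M (A - X)" for X by (rule ell_eq[OF sub])
  have ps0: "pi_set I K E lam mu A = Q A" and es0: "ell I K E lam mu i A = M A"
    using pi_set_eq[OF AIK] ell_eq[OF AIK] by auto
  have iAI: "i \<in> A \<inter> I" using iA iI by blast
  have "aa A * M A = M A * bb A + (\<Sum>j\<in>A \<inter> I. \<Sum>k\<in>A \<inter> K. lam j * mu k *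
     ((M (A - {j}) + M (A - {k}) + M (A - {j,k}))
      + of_bool (j = i) * (Q A + Q (A - {j}) + Q (A - {k}) + Q (A - {j,k}))))"
    unfolding limM[OF A] bb_def sum_lm_split[symmetric] by (intro sum.cong refl) (simp add: algebra_simps)
  also have "\<dots> = M A * bb A + (lam i * sum mu (A \<inter> K) * (Q A + Q (A - {i})) + lam i * (\<Sum>k\<in>A \<inter> K. mu k * (Q (A - {k}) + Q (A - {i,k})))
     + sum mu (A \<inter> K) * (\<Sum>j\<in>A \<inter> I. lam j * M (A - {j})) + sum lam (A \<inter> I) * (\<Sum>k\<in>A \<inter> K. mu k * M (A - {k}))
     + (\<Sum>j\<in>A \<inter> I. \<Sum>k\<in>A \<inter> K. lam j * mu k * M (A - {j,k})))"
    by (subst final_alg[OF iAI]) (auto simp: finI finK)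
  finally have "aa A * M A = M A * bb A + (lam i * sum mu (A \<inter> K) * (Q A + Q (A - {i})) + lam i * (\<Sum>k\<in>A \<inter> K. mu k * (Q (A - {k}) + Q (A - {i,k})))
     + sum mu (A \<inter> K) * (\<Sum>j\<in>A \<inter> I. lam j * M (A - {j})) + sum lam (A \<inter> I) * (\<Sum>k\<in>A \<inter> K. mu k * M (A - {k}))
     + (\<Sum>j\<in>A \<inter> I. \<Sum>k\<in>A \<inter> K. lam j * mu k * M (A - {j,k})))" .
  then show ?thesis unfolding Delta_eq ps es ps0 es0 by (simp add: algebra_simps)
qed

end

theorem proposition2:
  fixes I K :: "'a set" and E :: "'a \<Rightarrow> 'a \<Rightarrow> bool"
    and lam mu :: "'a \<Rightarrow> real" and i :: 'a
  assumes finI: "finite I" and finK: "finite K"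
    and neI: "I \<noteq> {}" and neK: "K \<noteq> {}" and disj: "I \<inter> K = {}"
    and bip: "\<And>x y. E x y \<Longrightarrow> x \<in> I \<and> y \<in> K"
    and conn: "graph_connected I K E"
    and lam_pos: "\<And>j. j \<in> I \<Longrightarrow> lam j > 0"
    and mu_pos: "\<And>k. k \<in> K \<Longrightarrow> mu k > 0"
    and lam_sum: "sum lam I = 1" and mu_sum: "sum mu K = 1"
    and stab: "\<And>A. A \<noteq> {} \<Longrightarrow> A \<subset> I \<Longrightarrow> sum lam A < sum mu (Kset K E A)"
    and iI: "i \<in> I"
  shows "meanL I K E lam mu i = (\<Sum>A\<in>J0fam I K E. ell I K E lam mu i A)
    \<and> (\<forall>A. i \<notin> A \<longrightarrow> ell I K E lam mu i A = 0)
    \<and> (\<forall>A\<in>Jfam I K E. i \<in> A \<longrightarrow>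
      Delta I K E lam mu A * ell I K E lam mu i A =
        lam i * sum mu (A \<inter> K) * (pi_set I K E lam mu A + pi_set I K E lam mu (A - {i}))
      + lam i * (\<Sum>k\<in>A \<inter> K. mu k * (pi_set I K E lam mu (A - {k}) + pi_set I K E lam mu (A - {i, k})))
      + sum mu (A \<inter> K) * (\<Sum>j\<in>A \<inter> I. lam j * ell I K E lam mu i (A - {j}))
      + sum lam (A \<inter> I) * (\<Sum>k\<in>A \<inter> K. mu k * ell I K E lam mu i (A - {k}))
      + (\<Sum>j\<in>A \<inter> I. \<Sum>k\<in>A \<inter> K. lam j * mu k * ell I K E lam mu i (A - {j, k})))"
proof -
  interpret bm I K E lam mu i
    by (rule bm.intro) (fact assms)+
  show ?thesis using conj1 conj2 conj3 by blast
qed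

end
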